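(* Let $G=(V,E)$ be a finite connected graph with girth at least $9$ and minimum degree $\delta\ge 3$, and let $G^2-E$ denote the graph on vertex set $V$ in which $u,v$ are adjacent if and only if $\mathrm{dist}_G(u,v)=2$. Then $\mathrm{cc}(G^2-E)\ge \min\{2\delta,\gamma(G^2-E)\}$.
   Context: All graphs are finite and reflexive (a loop at every vertex; moving along a loop means passing); loops are ignored for girth, degrees and distances. $\gamma$ denotes domination number. $G^2$ is the square of $G$ (adding edges between vertices at distance $2$), so $G^2-E$ has exactly the edges joining vertices at distance $2$ in $G$. Cops and Attacking Robbers: the cop player places $k$ cops on vertices, then the robber chooses a vertex. In each round the cops move (each cop moves to an adjacent vertex or passes), then the robber moves (to an adjacent vertex or passes). The cops win if after finitely many moves a cop moves onto the robber's vertex. Additionally, if the robber moves onto a vertex occupied by a cop, exactly one cop on that vertex is removed from the game; the robber's initial placement on a cop's vertex does not count as an attack. Both players play optimally. The attacking cop number $\mathrm{cc}(G)$ is the least $k$ such that $k$ cops can guarantee a win. *)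

theory Defs
  imports Main
begin

text \<open>A finite simple graph: vertex set V, symmetric irreflexive edge relation E on V.
  Loops (reflexivity) are not part of E; they are modelled in the game by allowing passing.\<close>
definition graph :: "'a set \<Rightarrow> ('a \<Rightarrow> 'a \<Rightarrow> bool) \<Rightarrow> bool" where
  "graph V E \<longleftrightarrow> finite V \<and> (\<forall>u v. E u v \<longrightarrow> u \<in> V \<and> v \<in> V)
      \<and> (\<forall>u v. E u v \<longrightarrow> E v u) \<and> (\<forall>u. \<not> E u u)"

definition walk :: "('a \<Rightarrow> 'a \<Rightarrow> bool) \<Rightarrow> 'a list \<Rightarrow> bool" where
  "walk E xs \<longleftrightarrow> xs \<noteq> [] \<and> successively E xs"

definition connected_graph :: "'a set \<Rightarrow> ('a \<Rightarrow> 'a \<Rightarrow> bool) \<Rightarrow> bool" where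
  "connected_graph V E \<longleftrightarrow>
     (\<forall>u\<in>V. \<forall>v\<in>V. \<exists>xs. walk E xs \<and> hd xs = u \<and> last xs = v)"

definition dist :: "('a \<Rightarrow> 'a \<Rightarrow> bool) \<Rightarrow> 'a \<Rightarrow> 'a \<Rightarrow> nat" where
  "dist E u v = (LEAST n. \<exists>xs. walk E xs \<and> hd xs = u \<and> last xs = v \<and> length xs = Suc n)"

definition is_cycle :: "('a \<Rightarrow> 'a \<Rightarrow> bool) \<Rightarrow> 'a list \<Rightarrow> bool" where
  "is_cycle E xs \<longleftrightarrow> length xs \<ge> 3 \<and> distinct xs \<and> walk E xs \<and> E (last xs) (hd xs)"

text \<open>girth at least g: every cycle has length at least g (vacuous for forests, girth = infinity).\<close>
definition girth_at_least :: "('a \<Rightarrow> 'a \<Rightarrow> bool) \<Rightarrow> nat \<Rightarrow> bool" where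
  "girth_at_least E g \<longleftrightarrow> (\<forall>xs. is_cycle E xs \<longrightarrow> length xs \<ge> g)"

definition degree :: "'a set \<Rightarrow> ('a \<Rightarrow> 'a \<Rightarrow> bool) \<Rightarrow> 'a \<Rightarrow> nat" where
  "degree V E v = card {w \<in> V. E v w}"

definition min_degree :: "'a set \<Rightarrow> ('a \<Rightarrow> 'a \<Rightarrow> bool) \<Rightarrow> nat" where
  "min_degree V E = Min (degree V E ` V)"

definition dominating :: "'a set \<Rightarrow> ('a \<Rightarrow> 'a \<Rightarrow> bool) \<Rightarrow> 'a set \<Rightarrow> bool" where
  "dominating V E D \<longleftrightarrow> D \<subseteq> V \<and> (\<forall>v\<in>V. v \<in> D \<or> (\<exists>u\<in>D. E u v))"

definition domination_number :: "'a set \<Rightarrow> ('a \<Rightarrow> 'a \<Rightarrow> bool) \<Rightarrow> nat" where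
  "domination_number V E = Min {card D | D. dominating V E D}"

definition sq_minus :: "'a set \<Rightarrow> ('a \<Rightarrow> 'a \<Rightarrow> bool) \<Rightarrow> 'a \<Rightarrow> 'a \<Rightarrow> bool" where
  "sq_minus V E u v \<longleftrightarrow> u \<in> V \<and> v \<in> V \<and> dist E u v = 2"

text \<open>The positions of the remaining cops form a list cs
  (cops are individual tokens); the robber is at r; it is the cops' turn.
  copwin E cs r: the cops can force a capture in finitely many moves (least fixed point).\<close>
inductive copwin :: "('a \<Rightarrow> 'a \<Rightarrow> bool) \<Rightarrow> 'a list \<Rightarrow> 'a \<Rightarrow> bool" for E where
  "list_all2 (\<lambda>x y. y = x \<or> E x y) cs cs' \<Longrightarrow>
   (r \<in> set cs' \<or> (\<forall>r'. (r' = r \<or> E r r') \<longrightarrow> copwin E (remove1 r' cs') r'))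
   \<Longrightarrow> copwin E cs r"

definition cops_win :: "'a set \<Rightarrow> ('a \<Rightarrow> 'a \<Rightarrow> bool) \<Rightarrow> nat \<Rightarrow> bool" where
  "cops_win V E k \<longleftrightarrow> (\<exists>cs. length cs = k \<and> set cs \<subseteq> V \<and> (\<forall>r\<in>V. copwin E cs r))"

definition attacking_cop_number :: "'a set \<Rightarrow> ('a \<Rightarrow> 'a \<Rightarrow> bool) \<Rightarrow> nat" where
  "attacking_cop_number V E = (LEAST k. cops_win V E k)"

end

theory Submission
  imports Defs
begin


fun nbw :: "'a list \<Rightarrow> bool" where
  "nbw (a # b # c # xs) = (a \<noteq> c \<and> nbw (b # c # xs))"
| "nbw _ = True"

lemma nbw_Cons: "nbw (a # xs) \<Longrightarrow> nbw xs"
  by (cases xs rule: nbw.cases) auto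

lemma nbw_appR: "nbw (xs @ ys) \<Longrightarrow> nbw ys"
  by (induction xs) (auto dest: nbw_Cons)

lemma nbw_appL: "nbw (xs @ ys) \<Longrightarrow> nbw xs"
  by (induction xs rule: nbw.induct) auto

lemma nbw_snoc3: "nbw (xs @ [a,b,c]) \<longleftrightarrow> nbw (xs @ [a,b]) \<and> a \<noteq> c"
  by (induction xs rule: nbw.induct) auto

lemma nbw_rev: "nbw xs \<Longrightarrow> nbw (rev xs)"
proof (induction xs rule: nbw.induct)
  case (1 a b c xs)
  then show ?case using nbw_snoc3[of "rev xs" c b a] by auto
qed auto

lemma nbw_join: "nbw (xs @ [a]) \<Longrightarrow> nbw (a # ys) \<Longrightarrow> (xs \<noteq> [] \<Longrightarrow> ys \<noteq> [] \<Longrightarrow> last xs \<noteq> hd ys)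
   \<Longrightarrow> nbw (xs @ a # ys)"
proof (induction xs)
  case Nil
  then show ?case by simp
next
  case (Cons b xs)
  show ?case
  proof (cases xs)
    case Nil
    then show ?thesis using Cons by (cases ys) auto
  next
    case (Cons b' xs'')
    have "nbw (xs @ [a])" using Cons.prems(1) nbw_Cons by fastforce
    then have "nbw (xs @ a # ys)" using Cons.IH Cons.prems by (simp add: \<open>xs = _\<close>)
    moreover have "b \<noteq> hd (xs'' @ [a])" using Cons.prems(1) \<open>xs = _\<close>
      by (cases xs'') auto
    ultimately show ?thesis using \<open>xs = _\<close> by (cases xs'') auto
  qed
qed

lemma closed_cycle:
  assumes irr: "\<forall>u. \<not> E u u"
  shows "successively E W \<Longrightarrow> nbw W \<Longrightarrow> 2 \<le> length W \<Longrightarrow> hd W = last W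
     \<Longrightarrow> \<exists>C. is_cycle E C \<and> length C < length W"
proof (induction "length W" arbitrary: W rule: less_induct)
  case less
  define B where "B = butlast W"
  have W: "W = B @ [last W]" using less.prems(3) unfolding B_def
    by (metis append_butlast_last_id list.size(3) not_numeral_le_zero)
  have lenB: "length B = length W - 1" unfolding B_def by simp
  have sB: "successively E B" and eB: "B \<noteq> [] \<Longrightarrow> E (last B) (last W)"
    using less.prems(1) W successively_append_iff[of E B "[last W]"] by auto
  show ?case
  proof (cases "distinct B")
    case True
    have "length B \<ge> 1" using lenB less.prems(3) by simp
    then consider "length B = 1" | "length B = 2" | "length B \<ge> 3" by linarith
    then show ?thesis
    proof cases
      case 1
      then obtain a where "B = [a]" by (auto simp: length_Suc_conv)
      then show ?thesis using W less.prems irr by (metis eB hd_append2 last.simps list.sel(1) not_Cons_self2)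
    next
      case 2
      then obtain a b where "B = [a,b]" by (auto simp: length_Suc_conv numeral_2_eq_2)
      then show ?thesis using W less.prems by (metis append_Cons append_Nil hd_append2 list.sel(1) nbw.simps(1) not_Cons_self2)
    next
      case 3
      have "B \<noteq> []" using 3 by auto
      have "hd B = last W" using W less.prems(4) \<open>B \<noteq> []\<close> by (metis hd_append2)
      then have "is_cycle E B" unfolding is_cycle_def walk_def
        using 3 True sB eB \<open>B \<noteq> []\<close> by auto
      then show ?thesis using lenB less.prems(3) by auto
    qed
  next
    case False
    then obtain xs y ys zs where B: "B = xs @ [y] @ ys @ [y] @ zs"
      using not_distinct_decomp by blast
    define S where "S = y # ys @ [y]"
    have W2: "W = xs @ S @ (zs @ [last W])" using W B S_def by simp
    have "successively E S" using less.prems(1) W2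
      by (metis S_def successively_append_iff)
    moreover have "nbw S" using less.prems(2) W2 nbw_appL nbw_appR by metis
    moreover have "2 \<le> length S" "hd S = last S" unfolding S_def by auto
    moreover have "length S < length W" using arg_cong[OF W2, of length] by simp
    ultimately obtain C where "is_cycle E C" "length C < length S"
      using less.hyps by blast
    then show ?thesis using \<open>length S < length W\<close> by auto
  qed
qed



context
  fixes V :: "'a set" and E :: "'a \<Rightarrow> 'a \<Rightarrow> bool"
  assumes G: "graph V E" and conn: "connected_graph V E" and gir: "girth_at_least E 9"
begin

lemma irr: "\<forall>u. \<not> E u u" using G unfolding graph_def by auto
lemma sym: "E u v \<Longrightarrow> E v u" using G unfolding graph_def by auto
lemma inV: "E u v \<Longrightarrow> u \<in> V \<and> v \<in> V" using G unfolding graph_def by auto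

lemma no_closed: "successively E W \<Longrightarrow> nbw W \<Longrightarrow> 2 \<le> length W \<Longrightarrow> length W \<le> 9
   \<Longrightarrow> hd W = last W \<Longrightarrow> False"
  using closed_cycle[where E=E and W=W, OF irr] gir unfolding girth_at_least_def by fastforce

lemma uniq: "successively E P \<Longrightarrow> successively E Q \<Longrightarrow> nbw P \<Longrightarrow> nbw Q \<Longrightarrow> P \<noteq> [] \<Longrightarrow> Q \<noteq> []
  \<Longrightarrow> hd P = hd Q \<Longrightarrow> last P = last Q \<Longrightarrow> length P + length Q \<le> 10 \<Longrightarrow> P = Q"
proof (induction P arbitrary: Q)
  case Nil
  then show ?case by simp
next
  case (Cons v P1)
  obtain Q1 where Q: "Q = v # Q1" using Cons.prems by (cases Q) auto
  show ?case
  proof (cases "P1 = [] \<or> Q1 = []")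
    case True
    then show ?thesis
    proof
      assume "P1 = []"
      show ?thesis
      proof (rule ccontr)
        assume "v # P1 \<noteq> Q"
        then have "Q1 \<noteq> []" using Q \<open>P1 = []\<close> by simp
        moreover have "2 \<le> length Q" "length Q \<le> 9" using Cons.prems(9) Q \<open>Q1 \<noteq> []\<close> \<open>P1 = []\<close> by (auto simp: Suc_le_eq)
        moreover have "hd Q = last Q" using Cons.prems(7,8) \<open>P1 = []\<close> by simp
        ultimately show False using no_closed[of Q] Cons.prems(2,4) by simp
      qed
    next
      assume "Q1 = []"
      show ?thesis
      proof (rule ccontr)
        assume "v # P1 \<noteq> Q"
        then have "P1 \<noteq> []" using Q \<open>Q1 = []\<close> by simp
        moreover have "2 \<le> length (v # P1)" "length (v # P1) \<le> 9" using Cons.prems(9) Q \<open>P1 \<noteq> []\<close> \<open>Q1 = []\<close> by (auto simp: Suc_le_eq)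
        moreover have "hd (v # P1) = last (v # P1)" using Cons.prems(7,8) Q \<open>Q1 = []\<close> by simp
        ultimately show False using no_closed[of "v # P1"] Cons.prems(1,3) by simp
      qed
    qed
  next
    case False
    show ?thesis
    proof (cases "hd P1 = hd Q1")
      case True
      have "P1 = Q1"
        apply (rule Cons.IH)
        using Cons.prems Q False True by (auto simp: successively_Cons nbw_Cons)
      then show ?thesis using Q by simp
    next
      case ne: False
      define W where "W = rev P1 @ v # Q1"
      have "successively E P1" using Cons.prems(1) by (auto simp: successively_Cons)
      then have "successively (\<lambda>x y. E y x) P1"
        by (rule successively_mono) (simp add: sym)
      then have "successively E (rev P1)" by (simp add: successively_rev)
      moreover have "E (last (rev P1)) v" using Cons.prems(1) False
        by (cases P1) (simp_all add: sym)
      ultimately have sW: "successively E W" using Cons.prems(2) Q False unfolding W_def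
        by (auto simp: successively_append_iff)
      have "nbw (rev P1 @ [v])" using nbw_rev[OF Cons.prems(3)] by simp
      then have nW: "nbw W" unfolding W_def
        using nbw_join[of "rev P1" v Q1] Cons.prems(4) Q ne False by (simp add: last_rev)
      have "hd W = last W" unfolding W_def using Cons.prems(8) Q False
        by (simp add: hd_append hd_rev)
      moreover have "length W \<le> 9" "2 \<le> length W" using Cons.prems(9) Q False unfolding W_def by (auto simp: Suc_le_eq)
      ultimately show ?thesis using no_closed[OF sW nW] by simp
    qed
  qed
qed

lemma len1: "length xs = Suc 0 \<longleftrightarrow> (\<exists>a. xs = [a])" by (auto simp: length_Suc_conv)
lemma len2: "length xs = Suc (Suc 0) \<longleftrightarrow> (\<exists>a b. xs = [a,b])" by (auto simp: length_Suc_conv)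
lemma len3: "length xs = Suc (Suc (Suc 0)) \<longleftrightarrow> (\<exists>a b c. xs = [a,b,c])" by (auto simp: length_Suc_conv)

lemma H_iff:
  assumes "u \<in> V" "v \<in> V"
  shows "sq_minus V E u v \<longleftrightarrow> (u \<noteq> v \<and> \<not> E u v \<and> (\<exists>w. E u w \<and> E w v))"
proof -
  define P where "P n = (\<exists>xs. walk E xs \<and> hd xs = u \<and> last xs = v \<and> length xs = Suc n)" for n
  have P0: "P 0 \<longleftrightarrow> u = v" unfolding P_def walk_def len1
    apply (rule iffI)
     apply auto[1]
    apply (rule exI[of _ "[u]"]) by simp
  have P1: "P 1 \<longleftrightarrow> E u v" unfolding P_def walk_def One_nat_def len2
    apply (rule iffI)
     apply auto[1]
    apply (rule exI[of _ "[u,v]"]) by simp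
  have P2: "P 2 \<longleftrightarrow> (\<exists>w. E u w \<and> E w v)" unfolding P_def walk_def numeral_2_eq_2 len3
    apply (rule iffI)
     apply auto[1]
    apply (elim exE, rule_tac x="[u,w,v]" in exI) by simp
  have ex: "\<exists>n. P n"
  proof -
    obtain xs where "walk E xs" "hd xs = u" "last xs = v" using conn assms unfolding connected_graph_def by blast
    then show ?thesis unfolding P_def walk_def by (metis Suc_pred length_greater_0_conv)
  qed
  have d: "dist E u v = (LEAST n. P n)" unfolding dist_def P_def by simp
  show ?thesis
  proof
    assume "sq_minus V E u v"
    then have L: "(LEAST n. P n) = 2" using d unfolding sq_minus_def by simp
    have "P 2" using LeastI_ex[OF ex] L by simp
    moreover have "\<not> P 0" using Least_le[of P 0] L by auto
    moreover have "\<not> P 1" using Least_le[of P 1] L by auto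
    ultimately show "u \<noteq> v \<and> \<not> E u v \<and> (\<exists>w. E u w \<and> E w v)" using P0 P1 P2 by auto
  next
    assume a: "u \<noteq> v \<and> \<not> E u v \<and> (\<exists>w. E u w \<and> E w v)"
    have "(LEAST n. P n) = 2"
    proof (rule Least_equality)
      show "P 2" using a P2 by simp
      fix m assume "P m"
      then have "m \<noteq> 0" "m \<noteq> 1" using a P0 P1 by (metis, metis)
      then show "2 \<le> m" by arith
    qed
    then show "sq_minus V E u v" using d assms unfolding sq_minus_def by simp
  qed
qed

end


lemma la2_set2: "list_all2 R xs ys \<Longrightarrow> y \<in> set ys \<Longrightarrow> \<exists>x\<in>set xs. R x y"
  by (induction rule: list_all2_induct) auto

lemma fl_uniq: "length (filter P xs) \<le> 1 \<Longrightarrow> a \<in> set xs \<Longrightarrow> b \<in> set xs \<Longrightarrow> P a \<Longrightarrow> P b \<Longrightarrow> a = b"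
proof -
  assume h: "length (filter P xs) \<le> 1" "a \<in> set xs" "b \<in> set xs" "P a" "P b"
  have "card (set (filter P xs)) \<le> Suc 0" using card_length[of "filter P xs"] h(1) by simp
  then have "\<forall>a1\<in>set (filter P xs). \<forall>a2\<in>set (filter P xs). a1 = a2"
    using card_le_Suc0_iff_eq[of "set (filter P xs)"] by simp
  then show "a = b" using h by auto
qed

lemma fl_pos: "a \<in> set xs \<Longrightarrow> P a \<Longrightarrow> 0 < length (filter P xs)"
  by (induction xs) auto

lemma fl_remove: "P a \<Longrightarrow> a \<in> set xs \<Longrightarrow> length (filter P (remove1 a xs)) = length (filter P xs) - 1"
proof (induction xs)
  case (Cons b xs)
  then show ?case using fl_pos[of a xs P] by auto
qed simp

lemma sum_filter:
  assumes "finite X" "\<forall>c x x'. x\<in>X \<longrightarrow> x'\<in>X \<longrightarrow> P x c \<longrightarrow> P x' c \<longrightarrow> x = x'"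
  shows "(\<Sum>x\<in>X. length (filter (P x) cs)) \<le> length cs"
proof (induction cs)
  case Nil
  then show ?case by simp
next
  case (Cons c cs)
  have "(\<Sum>x\<in>X. length (filter (P x) (c # cs))) =
        (\<Sum>x\<in>X. (if P x c then 1 else 0)) + (\<Sum>x\<in>X. length (filter (P x) cs))"
    by (subst sum.distrib[symmetric], rule sum.cong) auto
  moreover have "(\<Sum>x\<in>X. (if P x c then 1 else 0::nat)) = card {x\<in>X. P x c}"
    using sum.inter_filter[OF assms(1), of "\<lambda>_. 1::nat" "\<lambda>x. P x c"] by simp
  moreover have "card {x\<in>X. P x c} \<le> Suc 0"
    using card_le_Suc0_iff_eq[of "{x\<in>X. P x c}"] assms by auto
  ultimately show ?case using Cons.IH by simp
qed

context
  fixes V :: "'a set" and E :: "'a \<Rightarrow> 'a \<Rightarrow> bool"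
  assumes G: "graph V E" and conn: "connected_graph V E" and gir: "girth_at_least E 9"
    and md: "3 \<le> min_degree V E"
begin

lemma key:
  assumes r: "r \<in> V" and rn: "r \<notin> set cs" and len: "length cs < 2 * min_degree V E"
  shows "\<exists>y. sq_minus V E r y \<and> (\<forall>c\<in>set (remove1 y cs). c \<noteq> y \<and> \<not> sq_minus V E c y)"
proof -
  note sym = sym[OF G conn gir] and inV = inV[OF G conn gir]
  note uniq = uniq[OF G conn gir] and H_iff = H_iff[OF G conn gir]
  define N where "N = {w\<in>V. E r w}"
  define R where "R x = {c. \<exists>T. successively E (r#x#T) \<and> nbw (r#x#T) \<and> last (x#T) = c \<and> length T \<le> 3}" for x
  define cnt where "cnt x = length (filter (\<lambda>c. c \<in> R x) cs)" for x
  have finV: "finite V" using G unfolding graph_def by simp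
  have finN: "finite N" unfolding N_def using finV by simp
  have mdle: "min_degree V E \<le> degree V E v" if "v\<in>V" for v
    unfolding min_degree_def using finV that by simp
  have cardN: "min_degree V E \<le> card N" using mdle[OF r] unfolding degree_def N_def .
  have disj: "\<forall>c x x'. x\<in>N \<longrightarrow> x'\<in>N \<longrightarrow> c \<in> R x \<longrightarrow> c \<in> R x' \<longrightarrow> x = x'"
  proof (intro allI impI)
    fix c x x' assume "x\<in>N" "x'\<in>N" "c \<in> R x" "c\<in>R x'"
    then obtain T T' where T: "successively E (r#x#T)" "nbw (r#x#T)" "last (x#T) = c" "length T \<le> 3"
      and T': "successively E (r#x'#T')" "nbw (r#x'#T')" "last (x'#T') = c" "length T' \<le> 3"
      unfolding R_def by blast
    have "r#x#T = r#x'#T'" by (rule uniq) (use T T' in auto)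
    then show "x = x'" by simp
  qed
  have sumle: "(\<Sum>x\<in>N. cnt x) \<le> length cs" unfolding cnt_def
    by (rule sum_filter[OF finN]) (use disj in blast)
  have "\<exists>x\<in>N. cnt x \<le> 1"
  proof (rule ccontr)
    assume "\<not> ?thesis"
    then have "\<And>x. x\<in>N \<Longrightarrow> 2 \<le> cnt x" by auto
    then have "(\<Sum>x\<in>N. 2) \<le> (\<Sum>x\<in>N. cnt x)" by (rule sum_mono)
    then have "2 * card N \<le> length cs" using sumle by simp
    then show False using len cardN by linarith
  qed
  then obtain x where xN: "x \<in> N" and cx: "cnt x \<le> 1" by blast
  have Erx: "E r x" and xV: "x \<in> V" using xN unfolding N_def by auto
  define Y where "Y = {w\<in>V. E x w} - {r}"
  have finY: "finite Y" unfolding Y_def using finV by simp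
  have "3 \<le> card {w\<in>V. E x w}" using md mdle[OF xV] unfolding degree_def by simp
  moreover have "r \<in> {w\<in>V. E x w}" using r sym[OF Erx] by simp
  ultimately have cardY: "2 \<le> card Y" unfolding Y_def using finV by (simp add: card_Diff_singleton)
  have Yp: "E x y \<and> y \<noteq> r \<and> y \<in> V" if "y \<in> Y" for y using that unfolding Y_def by auto
  have Hry: "sq_minus V E r y" if y: "y \<in> Y" for y
  proof -
    have "\<not> E r y"
    proof
      assume "E r y"
      have "[r,y] = [r,x,y]" by (rule uniq) (use Yp[OF y] Erx \<open>E r y\<close> in auto)
      then show False by simp
    qed
    then show ?thesis using H_iff[OF r] Yp[OF y] Erx by auto
  qed
  have blockR: "c \<in> R x" if y: "y \<in> Y" and cr: "c \<noteq> r" and b: "c = y \<or> sq_minus V E c y" for y c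
  proof (cases "c = y")
    case True
    then show ?thesis unfolding R_def using Yp[OF y] Erx
      by (intro CollectI exI[of _ "[y]"]) auto
  next
    case False
    then have "sq_minus V E c y" using b by simp
    then have cV: "c \<in> V" unfolding sq_minus_def by simp
    then obtain w where w: "c \<noteq> y" "\<not> E c y" "E c w" "E w y"
      using H_iff[OF cV] Yp[OF y] \<open>sq_minus V E c y\<close> by blast
    show ?thesis
    proof (cases "w = x")
      case True
      then show ?thesis unfolding R_def using Yp[OF y] Erx w cr sym[OF w(3)]
        by (intro CollectI exI[of _ "[c]"]) auto
    next
      case False
      then show ?thesis unfolding R_def using Yp[OF y] Erx w cr sym[OF w(3)] sym[OF w(4)]
        by (intro CollectI exI[of _ "[y,w,c]"]) auto
    qed
  qed
  show ?thesis
  proof (cases "\<exists>y\<in>Y. y \<in> set cs")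
    case True
    then obtain y where y: "y \<in> Y" "y \<in> set cs" by blast
    have yR: "y \<in> R x" using blockR[OF y(1), of y] Yp[OF y(1)] by blast
    have "length (filter (\<lambda>c. c\<in>R x) (remove1 y cs)) = 0"
      using fl_remove[of "\<lambda>c. c\<in>R x" y cs] yR y(2) cx unfolding cnt_def by simp
    then have none: "\<forall>c\<in>set (remove1 y cs). c \<notin> R x" by (simp add: filter_empty_conv)
    show ?thesis
    proof (rule exI[of _ y], intro conjI ballI)
      show "sq_minus V E r y" using Hry[OF y(1)] .
      fix c assume c: "c \<in> set (remove1 y cs)"
      then have "c \<in> set cs" by (meson notin_set_remove1)
      then have "c \<noteq> r" using rn by auto
      then show "c \<noteq> y" "\<not> sq_minus V E c y" using blockR[OF y(1) \<open>c \<noteq> r\<close>] none c by blast+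
    qed
  next
    case False
    have "\<exists>y\<in>Y. \<forall>c\<in>set cs. c \<in> R x \<longrightarrow> \<not> (c = y \<or> sq_minus V E c y)"
    proof (cases "\<exists>c0\<in>set cs. c0 \<in> R x")
      case False
      have "Y \<noteq> {}" using cardY by auto
      then show ?thesis using False by blast
    next
      case True
      then obtain c0 where c0: "c0 \<in> set cs" "c0 \<in> R x" by blast
      have all: "\<forall>c\<in>set cs. c\<in>R x \<longrightarrow> c = c0"
      proof (intro ballI impI)
        fix c assume "c \<in> set cs" "c \<in> R x"
        then show "c = c0" using fl_uniq[of "\<lambda>c. c\<in>R x" cs c c0] cx c0 unfolding cnt_def by simp
      qed
      have c0Y: "c0 \<notin> Y" using False c0 by blast
      have c0r: "c0 \<noteq> r" using rn c0 by auto
      define S where "S = {y\<in>Y. c0 = y \<or> sq_minus V E c0 y}"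
      have SY: "S \<subseteq> Y" unfolding S_def by auto
      have path: "\<exists>w. successively E [r,x,y,w,c0] \<and> nbw [r,x,y,w,c0]" if y: "y \<in> S" for y
      proof -
        have yY: "y \<in> Y" and h: "sq_minus V E c0 y" using y c0Y unfolding S_def by auto
        then have c0V: "c0 \<in> V" unfolding sq_minus_def by simp
        then obtain w where w: "c0 \<noteq> y" "\<not> E c0 y" "E c0 w" "E w y"
          using H_iff[OF c0V] Yp[OF yY] h by blast
        have "w \<noteq> x"
        proof
          assume "w = x"
          then have "c0 \<in> Y" unfolding Y_def using w c0r sym[OF w(3)] c0V by auto
          then show False using c0Y by simp
        qed
        then show ?thesis using w Erx Yp[OF yY] sym[OF w(3)] sym[OF w(4)] by (intro exI[of _ w]) auto
      qed
      have "card S \<le> Suc 0"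
      proof (subst card_le_Suc0_iff_eq)
        show "finite S" using SY finY finite_subset by blast
        show "\<forall>a1\<in>S. \<forall>a2\<in>S. a1 = a2"
        proof (intro ballI)
          fix y1 y2 assume "y1 \<in> S" "y2 \<in> S"
          then obtain w1 w2 where p1: "successively E [r,x,y1,w1,c0]" "nbw [r,x,y1,w1,c0]"
            and p2: "successively E [r,x,y2,w2,c0]" "nbw [r,x,y2,w2,c0]" using path by blast
          have "[r,x,y1,w1,c0] = [r,x,y2,w2,c0]" by (rule uniq) (use p1 p2 in auto)
          then show "y1 = y2" by simp
        qed
      qed
      then have "card S < card Y" using cardY by simp
      have "Y - S \<noteq> {}"
      proof
        assume "Y - S = {}"
        then have "Y \<subseteq> S" by blast
        then have "card Y \<le> card S" using SY finY finite_subset card_mono by metis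
        then show False using \<open>card S < card Y\<close> by simp
      qed
      then obtain y where "y \<in> Y" "y \<notin> S" by blast
      have "\<not> (c0 = y \<or> sq_minus V E c0 y)" using \<open>y \<in> Y\<close> \<open>y \<notin> S\<close> unfolding S_def by simp
      then show ?thesis using all \<open>y \<in> Y\<close> by metis
    qed
    then obtain y where y: "y \<in> Y" and yb: "\<forall>c\<in>set cs. c \<in> R x \<longrightarrow> \<not> (c = y \<or> sq_minus V E c y)"
      by blast
    show ?thesis
    proof (rule exI[of _ y], intro conjI ballI)
      show "sq_minus V E r y" using Hry[OF y] .
      fix c assume c: "c \<in> set (remove1 y cs)"
      then have "c \<in> set cs" by (meson notin_set_remove1)
      then have "c \<noteq> r" using rn by auto
      then show "c \<noteq> y" "\<not> sq_minus V E c y" using blockR[OF y \<open>c \<noteq> r\<close>] yb \<open>c \<in> set cs\<close> by blast+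
    qed
  qed
qed

lemma robber:
  "copwin (sq_minus V E) cs r \<Longrightarrow> r \<in> V \<Longrightarrow> length cs < 2 * min_degree V E
   \<Longrightarrow> (\<forall>c\<in>set cs. c \<noteq> r \<and> \<not> sq_minus V E c r) \<Longrightarrow> False"
proof (induction rule: copwin.induct)
  case (1 cs cs' r)
  have "r \<notin> set cs'"
  proof
    assume "r \<in> set cs'"
    then obtain c where "c \<in> set cs" "r = c \<or> sq_minus V E c r" using la2_set2[OF 1(1)] by blast
    then show False using 1(5) by auto
  qed
  moreover have lcs: "length cs' = length cs" using 1(1) by (simp add: list_all2_lengthD)
  ultimately obtain y where y: "sq_minus V E r y" "\<forall>c\<in>set (remove1 y cs'). c \<noteq> y \<and> \<not> sq_minus V E c y"
    using key[of r cs'] 1(3,4) by auto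
  have yV: "y \<in> V" using y(1) unfolding sq_minus_def by simp
  have "length (remove1 y cs') < 2 * min_degree V E"
    using length_remove1[of y cs'] lcs 1(4) by (simp split: if_splits)
  then show False using 1(2) \<open>r \<notin> set cs'\<close> y yV by blast
qed

end


theorem lemma5:
  fixes V :: "'a set" and E :: "'a \<Rightarrow> 'a \<Rightarrow> bool"
  assumes "graph V E" and "V \<noteq> {}" and "connected_graph V E"
    and "girth_at_least E 9" and "min_degree V E \<ge> 3"
  shows "attacking_cop_number V (sq_minus V E)
           \<ge> min (2 * min_degree V E) (domination_number V (sq_minus V E))"
proof -
  have finV: "finite V" using assms(1) unfolding graph_def by simp
  obtain xs where xs: "set xs = V" using finite_list[OF finV] by blast
  have ex: "cops_win V (sq_minus V E) (length xs)" unfolding cops_win_def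
  proof (rule exI[of _ xs], intro conjI ballI)
    show "set xs \<subseteq> V" using xs by simp
    fix r assume "r \<in> V"
    show "copwin (sq_minus V E) xs r"
      by (rule copwin.intros[of _ xs xs]) (auto simp: list_all2_same xs \<open>r \<in> V\<close>)
  qed simp
  define k where "k = (LEAST k. cops_win V (sq_minus V E) k)"
  have cw: "cops_win V (sq_minus V E) k" unfolding k_def using LeastI_ex ex by metis
  have "min (2 * min_degree V E) (domination_number V (sq_minus V E)) \<le> k"
  proof (rule ccontr)
    assume "\<not> ?thesis"
    then have k1: "k < 2 * min_degree V E" and k2: "k < domination_number V (sq_minus V E)" by auto
    obtain cs where cs: "length cs = k" "set cs \<subseteq> V" "\<forall>r\<in>V. copwin (sq_minus V E) cs r"
      using cw unfolding cops_win_def by blast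
    have nd: "\<not> dominating V (sq_minus V E) (set cs)"
    proof
      assume d: "dominating V (sq_minus V E) (set cs)"
      have "finite {card D |D. dominating V (sq_minus V E) D}"
      proof (rule finite_subset)
        show "{card D |D. dominating V (sq_minus V E) D} \<subseteq> card ` Pow V"
          unfolding dominating_def by auto
      qed (use finV in simp)
      then have "domination_number V (sq_minus V E) \<le> card (set cs)"
        unfolding domination_number_def using d by (intro Min_le) auto
      also have "\<dots> \<le> k" using card_length cs(1) by metis
      finally show False using k2 by simp
    qed
    then obtain r where r: "r \<in> V" "r \<notin> set cs" "\<forall>u\<in>set cs. \<not> sq_minus V E u r"
      using cs(2) unfolding dominating_def by blast
    show False
      using robber[OF assms(1,3,4,5) _ r(1)] cs r k1 by blast
  qed
  then show ?thesis unfolding attacking_cop_number_def k_def .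
qed

end
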